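(* In the fixed-flow two-parallel-path setting with $l_{P_1}<l_{P_2}$, for every integer $t\ge L$ we have $r_{ss_1}(t+1)>r_{\min}(t)$. More precisely, $r_{ss_1}(t+1)=r_{\min}(t)\gamma_s(t)$ with $$\gamma_s(t)=\frac{a(t)p_{ss_2}(t)+a(t)f_{ss_2}(t)+(1-l_{P_1})\,\beta(t)\,b_{d_2d}(t-n+1)}{p_{ss_2}(t)+f_{ss_2}(t)+(1-l_{P_2})\,b_{d_2d}(t-n+1)}>1,$$ where $a(t)=r_{ss_1}(t)/r_{\min}(t)\ge1$ and $\beta(t)=\dfrac{b_{d_1d}(t-m+1)}{b_{d_2d}(t-n+1)\,r_{\min}(t)}\ge1$.
   Context: Model (linear decision rule). Directed graph $G=(V,E)$, source $s$, destination $d$, discrete time; pheromone $p_{uv}(t)$, forward flows $f_v(t)$, backward flows $b_v(t)$; leakages $l_v\in[0,1]$; decay $\delta\in(0,1)$; exogenous inputs $f_s(t),b_d(t)$. Edge flows: $f_{uv}(t)=f_u(t)p_{uv}(t)/\sum_{z:(u,z)\in E}p_{uz}(t)$, $b_{uv}(t)=b_v(t)p_{uv}(t)/\sum_{z:(z,v)\in E}p_{zv}(t)$ (at a vertex with a single outgoing, resp. incoming, edge the whole flow goes along it). Updates: $f_v(t+1)=(1-l_v)\sum_{z:(z,v)\in E}f_{zv}(t)$ for $v\neq s$, $b_u(t+1)=(1-l_u)\sum_{z:(u,z)\in E}b_{uz}(t)$ for $u\ne d$, $p_{uv}(t+1)=\delta(p_{uv}(t)+f_{uv}(t)+b_{uv}(t))$.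 Path leakage $l_P=1-\prod_{v\in P\setminus\{s,d\}}(1-l_v)$. Two parallel paths: $G$ is the union of directed paths $P_1,P_2$ from $s$ to $d$ sharing only $s,d$; $s_1,s_2$ are the successors of $s$ and $d_1,d_2$ the predecessors of $d$ on $P_1,P_2$; $m=\mathrm{len}(P_1)$, $n=\mathrm{len}(P_2)$ (numbers of edges), $L=\max(m,n)$. Potential: $r_{ss_1}(t)=p_{ss_1}(t)/p_{ss_2}(t)$, $r_{d_1d}(t)=p_{d_1d}(t)/p_{d_2d}(t)$, and for $t\ge L$, $r_{\min}(t)=\min\{r_{ss_1}(t-i),\,r_{d_1d}(t-i):0\le i\le L-1\}$. Fixed-flow setting: $f_s(t)=\bar f>0$ and $b_d(t)=\bar b>0$ for all $t$, and all initial pheromone levels $p_{uv}(0)$ are positive. *)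

theory Defs
  imports Complex_Main
begin

definition out_weight :: "('v \<times> 'v) set \<Rightarrow> ('v \<times> 'v \<Rightarrow> real) \<Rightarrow> 'v \<Rightarrow> real" where
  "out_weight E p u = (\<Sum>z\<in>{z. (u, z) \<in> E}. p (u, z))"

definition in_weight :: "('v \<times> 'v) set \<Rightarrow> ('v \<times> 'v \<Rightarrow> real) \<Rightarrow> 'v \<Rightarrow> real" where
  "in_weight E p v = (\<Sum>z\<in>{z. (z, v) \<in> E}. p (z, v))"

definition fwd_edge :: "('v \<times> 'v) set \<Rightarrow> ('v \<times> 'v \<Rightarrow> real) \<Rightarrow> ('v \<Rightarrow> real) \<Rightarrow> 'v \<Rightarrow> 'v \<Rightarrow> real" where
  "fwd_edge E p f u v = f u * p (u, v) / out_weight E p u"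

definition bwd_edge :: "('v \<times> 'v) set \<Rightarrow> ('v \<times> 'v \<Rightarrow> real) \<Rightarrow> ('v \<Rightarrow> real) \<Rightarrow> 'v \<Rightarrow> 'v \<Rightarrow> real" where
  "bwd_edge E p b u v = b v * p (u, v) / in_weight E p v"

text \<open>Parameters: edges E, source s, destination d, leakages l, decay \<delta>,
  exogenous inputs fs (at s) and bd (at d), initial pheromone p0 and
  initial vertex flows f0, b0 (at s and d overwritten by the exogenous inputs).\<close>
fun aco_state ::
  "('v \<times> 'v) set \<Rightarrow> 'v \<Rightarrow> 'v \<Rightarrow> ('v \<Rightarrow> real) \<Rightarrow> real \<Rightarrow> (nat \<Rightarrow> real) \<Rightarrow> (nat \<Rightarrow> real)
   \<Rightarrow> ('v \<times> 'v \<Rightarrow> real) \<Rightarrow> ('v \<Rightarrow> real) \<Rightarrow> ('v \<Rightarrow> real) \<Rightarrow> nat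
   \<Rightarrow> ('v \<times> 'v \<Rightarrow> real) \<times> ('v \<Rightarrow> real) \<times> ('v \<Rightarrow> real)" where
  "aco_state E s d l \<delta> fs bd p0 f0 b0 0 = (p0, f0(s := fs 0), b0(d := bd 0))"
| "aco_state E s d l \<delta> fs bd p0 f0 b0 (Suc t) =
     (case aco_state E s d l \<delta> fs bd p0 f0 b0 t of (p, f, b) \<Rightarrow>
       ((\<lambda>(u, v). \<delta> * (p (u, v) + fwd_edge E p f u v + bwd_edge E p b u v)),
        (\<lambda>v. if v = s then fs (Suc t)
             else (1 - l v) * (\<Sum>z\<in>{z. (z, v) \<in> E}. fwd_edge E p f z v)),
        (\<lambda>u. if u = d then bd (Suc t)
             else (1 - l u) * (\<Sum>z\<in>{z. (u, z) \<in> E}. bwd_edge E p b u z))))"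

definition aco_pher where
  "aco_pher E s d l \<delta> fs bd p0 f0 b0 t = fst (aco_state E s d l \<delta> fs bd p0 f0 b0 t)"
definition aco_fwd where
  "aco_fwd E s d l \<delta> fs bd p0 f0 b0 t = fst (snd (aco_state E s d l \<delta> fs bd p0 f0 b0 t))"
definition aco_bwd where
  "aco_bwd E s d l \<delta> fs bd p0 f0 b0 t = snd (snd (aco_state E s d l \<delta> fs bd p0 f0 b0 t))"

definition path_edges :: "'v list \<Rightarrow> ('v \<times> 'v) set" where
  "path_edges P = set (zip P (tl P))"

definition path_leak :: "('v \<Rightarrow> real) \<Rightarrow> 'v list \<Rightarrow> real" where
  "path_leak l P = 1 - prod_list (map (\<lambda>v. 1 - l v) (butlast (tl P)))"

definition two_parallel_paths :: "'v list \<Rightarrow> 'v list \<Rightarrow> 'v \<Rightarrow> 'v \<Rightarrow> bool" where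
  "two_parallel_paths P1 P2 s d \<longleftrightarrow>
     distinct P1 \<and> distinct P2 \<and> length P1 \<ge> 2 \<and> length P2 \<ge> 2 \<and>
     hd P1 = s \<and> last P1 = d \<and> hd P2 = s \<and> last P2 = d \<and>
     set P1 \<inter> set P2 = {s, d}"

end

theory Submission
  imports Defs
begin


lemma pe_iff: "(x,y) \<in> path_edges P \<longleftrightarrow> (\<exists>i. Suc i < length P \<and> x = P!i \<and> y = P!Suc i)"
proof
  assume "(x,y) \<in> path_edges P"
  then obtain i where "i < length P - 1" "x = P!i" "y = tl P ! i"
    unfolding path_edges_def set_zip by auto
  then show "\<exists>i. Suc i < length P \<and> x = P!i \<and> y = P!Suc i" by (auto simp: nth_tl intro!: exI[of _ i])
next
  assume "\<exists>i. Suc i < length P \<and> x = P!i \<and> y = P!Suc i"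
  then obtain i where "Suc i < length P" "x = P!i" "y = P!Suc i" by blast
  then show "(x,y) \<in> path_edges P" unfolding path_edges_def set_zip by (force simp: nth_tl)
qed

lemma tp_sym: "two_parallel_paths P Q s d \<Longrightarrow> two_parallel_paths Q P s d"
  unfolding two_parallel_paths_def by auto

lemma tp_0: "two_parallel_paths P Q s d \<Longrightarrow> P!0 = s"
  unfolding two_parallel_paths_def by (metis hd_conv_nth list.size(3) not_numeral_le_zero)

lemma tp_last: "two_parallel_paths P Q s d \<Longrightarrow> P!(length P - 1) = d"
  unfolding two_parallel_paths_def by (metis last_conv_nth list.size(3) not_numeral_le_zero)

lemma dist_idx: "distinct P \<Longrightarrow> i < length P \<Longrightarrow> j < length P \<Longrightarrow> P!i = P!j \<longleftrightarrow> i = j"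
  by (simp add: nth_eq_iff_index_eq)

lemma tp_sd: "two_parallel_paths P Q s d \<Longrightarrow> s \<noteq> d"
proof -
  assume tp: "two_parallel_paths P Q s d"
  then have "distinct P" "length P \<ge> 2" unfolding two_parallel_paths_def by auto
  moreover have "P \<noteq> []" using \<open>length P \<ge> 2\<close> by auto
  ultimately have "P!0 \<noteq> P!(length P - 1)" using dist_idx[of P 0 "length P - 1"] by auto
  then show ?thesis using tp_0[OF tp] tp_last[OF tp] by simp
qed

lemma tp_inner_notQ:
  assumes tp: "two_parallel_paths P Q s d" and k: "0 < k" "Suc k < length P"
  shows "P!k \<notin> set Q"
proof
  assume "P!k \<in> set Q"
  moreover have "P!k \<in> set P" using k by simp
  ultimately have "P!k = s \<or> P!k = d" using tp unfolding two_parallel_paths_def by blast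
  moreover have "distinct P" using tp unfolding two_parallel_paths_def by blast
  moreover have "P \<noteq> []" using k by auto
  ultimately show False using tp_0[OF tp] tp_last[OF tp] k dist_idx[of P k 0] dist_idx[of P k "length P - 1"]
    by auto
qed

lemma out_inner:
  assumes tp: "two_parallel_paths P Q s d" and k: "0 < k" "Suc k < length P"
  shows "{z. (P!k, z) \<in> path_edges P \<union> path_edges Q} = {P!Suc k}"
proof -
  have dP: "distinct P" using tp unfolding two_parallel_paths_def by blast
  have nq: "P!k \<notin> set Q" by (rule tp_inner_notQ[OF tp k])
  { fix z assume "(P!k, z) \<in> path_edges Q"
    then have False using nq by (auto simp: pe_iff) }
  moreover
  { fix z assume "(P!k, z) \<in> path_edges P"
    then obtain i where "Suc i < length P" "P!k = P!i" "z = P!Suc i" by (auto simp: pe_iff)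
    then have "z = P!Suc k" using dP k dist_idx[of P k i] by auto }
  moreover have "(P!k, P!Suc k) \<in> path_edges P" using k by (auto simp: pe_iff)
  ultimately show ?thesis by blast
qed

lemma in_inner:
  assumes tp: "two_parallel_paths P Q s d" and k: "0 < k" "Suc k < length P"
  shows "{z. (z, P!k) \<in> path_edges P \<union> path_edges Q} = {P!(k - 1)}"
proof -
  have dP: "distinct P" using tp unfolding two_parallel_paths_def by blast
  have nq: "P!k \<notin> set Q" by (rule tp_inner_notQ[OF tp k])
  { fix z assume "(z, P!k) \<in> path_edges Q"
    then have False using nq by (auto simp: pe_iff) }
  moreover
  { fix z assume "(z, P!k) \<in> path_edges P"
    then obtain i where "Suc i < length P" "P!k = P!Suc i" "z = P!i" by (auto simp: pe_iff)
    then have "z = P!(k - 1)" using dP k dist_idx[of P k "Suc i"] by auto }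
  moreover have "(P!(k-1), P!k) \<in> path_edges P" using k by (auto simp: pe_iff intro!: exI[of _ "k - 1"])
  ultimately show ?thesis by blast
qed

lemma out_s:
  assumes tp: "two_parallel_paths P Q s d"
  shows "{z. (s, z) \<in> path_edges P \<union> path_edges Q} = {P!1, Q!1}"
proof -
  have tq: "two_parallel_paths Q P s d" by (rule tp_sym[OF tp])
  have dP: "distinct P" "distinct Q" "length P \<ge> 2" "length Q \<ge> 2"
    using tp unfolding two_parallel_paths_def by blast+
  { fix z assume "(s, z) \<in> path_edges P"
    then obtain i where "Suc i < length P" "s = P!i" "z = P!Suc i" by (auto simp: pe_iff)
    then have "z = P!1" using dP tp_0[OF tp] dist_idx[of P 0 i] by (cases P) auto }
  moreover
  { fix z assume "(s, z) \<in> path_edges Q"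
    then obtain i where "Suc i < length Q" "s = Q!i" "z = Q!Suc i" by (auto simp: pe_iff)
    then have "z = Q!1" using dP tp_0[OF tq] dist_idx[of Q 0 i] by (cases Q) auto }
  moreover have "(s, P!1) \<in> path_edges P" using dP tp_0[OF tp] by (auto simp: pe_iff intro!: exI[of _ 0])
  moreover have "(s, Q!1) \<in> path_edges Q" using dP tp_0[OF tq] by (auto simp: pe_iff intro!: exI[of _ 0])
  ultimately show ?thesis by blast
qed

lemma in_d_aux:
  assumes tp: "two_parallel_paths P Q s d" and e: "(z, d) \<in> path_edges P"
  shows "z = P!(length P - 1 - 1)"
proof -
  have dP: "distinct P" "length P \<ge> 2" using tp unfolding two_parallel_paths_def by blast+
  obtain i where i: "Suc i < length P" "d = P!Suc i" "z = P!i" using e by (auto simp: pe_iff)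
  have eq: "P!Suc i = P!(length P - 1)" using i(2) tp_last[OF tp] by metis
  have li: "length P - 1 < length P" using dP by auto
  from dist_idx[OF dP(1) i(1) li] eq have "Suc i = length P - 1" by simp
  then have "i = length P - 1 - 1" by simp
  then show ?thesis using i(3) by simp
qed

lemma in_d_aux2:
  assumes tp: "two_parallel_paths P Q s d"
  shows "(P!(length P - 1 - 1), d) \<in> path_edges P"
proof -
  have dP: "length P \<ge> 2" using tp unfolding two_parallel_paths_def by blast+
  have "(P!(length P - 1 - 1), P!(length P - 1)) \<in> path_edges P"
    unfolding pe_iff by (rule exI[of _ "length P - 1 - 1"]) (use dP in \<open>auto simp: Suc_diff_Suc\<close>)
  then show ?thesis using tp_last[OF tp] by simp
qed

lemma in_d:
  assumes tp: "two_parallel_paths P Q s d"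
  shows "{z. (z, d) \<in> path_edges P \<union> path_edges Q} = {P!(length P - 1 - 1), Q!(length Q - 1 - 1)}"
  using in_d_aux[OF tp] in_d_aux[OF tp_sym[OF tp]] in_d_aux2[OF tp] in_d_aux2[OF tp_sym[OF tp]]
  by blast



locale aco =
  fixes E :: "('v \<times> 'v) set" and s d :: 'v and P1 P2 :: "'v list"
    and l :: "'v \<Rightarrow> real" and \<delta> fbar bbar :: real
    and p0 :: "'v \<times> 'v \<Rightarrow> real" and f0 b0 :: "'v \<Rightarrow> real"
    and p :: "nat \<Rightarrow> 'v \<times> 'v \<Rightarrow> real" and f b :: "nat \<Rightarrow> 'v \<Rightarrow> real"
  assumes paths: "two_parallel_paths P1 P2 s d"
    and E_def: "E = path_edges P1 \<union> path_edges P2"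
    and leak: "\<forall>v \<in> set P1 \<union> set P2. 0 \<le> l v \<and> l v \<le> 1"
    and decay: "0 < \<delta>"
    and inputs: "fbar > 0" "bbar > 0"
    and p0_pos: "\<forall>e \<in> E. p0 e > 0"
    and init_flows: "\<forall>v \<in> set P1 \<union> set P2. f0 v \<ge> 0 \<and> b0 v \<ge> 0"
    and p_def: "p = aco_pher E s d l \<delta> (\<lambda>_. fbar) (\<lambda>_. bbar) p0 f0 b0"
    and f_def: "f = aco_fwd E s d l \<delta> (\<lambda>_. fbar) (\<lambda>_. bbar) p0 f0 b0"
    and b_def: "b = aco_bwd E s d l \<delta> (\<lambda>_. fbar) (\<lambda>_. bbar) p0 f0 b0"
begin

lemma state_eq: "aco_state E s d l \<delta> (\<lambda>_. fbar) (\<lambda>_. bbar) p0 f0 b0 t = (p t, f t, b t)"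
  by (simp add: p_def f_def b_def aco_pher_def aco_fwd_def aco_bwd_def)

lemma p_Suc: "p (Suc t) (u,v) = \<delta> * (p t (u,v) + fwd_edge E (p t) (f t) u v + bwd_edge E (p t) (b t) u v)"
proof -
  have "p (Suc t) = fst (aco_state E s d l \<delta> (\<lambda>_. fbar) (\<lambda>_. bbar) p0 f0 b0 (Suc t))"
    by (simp add: p_def aco_pher_def)
  then show ?thesis by (simp add: state_eq)
qed

lemma f_Suc: "f (Suc t) v = (if v = s then fbar else (1 - l v) * (\<Sum>z\<in>{z. (z, v) \<in> E}. fwd_edge E (p t) (f t) z v))"
proof -
  have "f (Suc t) = fst (snd (aco_state E s d l \<delta> (\<lambda>_. fbar) (\<lambda>_. bbar) p0 f0 b0 (Suc t)))"
    by (simp add: f_def aco_fwd_def)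
  then show ?thesis by (simp add: state_eq)
qed

lemma b_Suc: "b (Suc t) u = (if u = d then bbar else (1 - l u) * (\<Sum>z\<in>{z. (u, z) \<in> E}. bwd_edge E (p t) (b t) u z))"
proof -
  have "b (Suc t) = snd (snd (aco_state E s d l \<delta> (\<lambda>_. fbar) (\<lambda>_. bbar) p0 f0 b0 (Suc t)))"
    by (simp add: b_def aco_bwd_def)
  then show ?thesis by (simp add: state_eq)
qed

lemma p_0: "p 0 = p0" by (simp add: p_def aco_pher_def)
lemma f_0: "f 0 v = (if v = s then fbar else f0 v)" by (simp add: f_def aco_fwd_def)
lemma b_0: "b 0 v = (if v = d then bbar else b0 v)" by (simp add: b_def aco_bwd_def)

lemma f_s: "f t s = fbar" by (cases t) (simp_all add: f_0 f_Suc)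
lemma b_d: "b t d = bbar" by (cases t) (simp_all add: b_0 b_Suc)

lemma E_V: "(u,v) \<in> E \<Longrightarrow> u \<in> set P1 \<union> set P2 \<and> v \<in> set P1 \<union> set P2"
  unfolding E_def by (auto simp: pe_iff)

lemma finE: "finite E" unfolding E_def path_edges_def by simp

lemma fin_out: "finite {z. (u,z) \<in> E}"
proof -
  have "{z. (u,z) \<in> E} \<subseteq> snd ` E" by force
  then show ?thesis using finE finite_subset by blast
qed

lemma fin_in: "finite {z. (z,v) \<in> E}"
proof -
  have "{z. (z,v) \<in> E} \<subseteq> fst ` E" by force
  then show ?thesis using finE finite_subset by blast
qed

definition inv :: "nat \<Rightarrow> bool" where
  "inv t \<longleftrightarrow> (\<forall>e\<in>E. p t e > 0) \<and> (\<forall>v \<in> set P1 \<union> set P2. f t v \<ge> 0 \<and> b t v \<ge> 0)"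

lemma fwd_nonneg: "inv t \<Longrightarrow> (u,v) \<in> E \<Longrightarrow> fwd_edge E (p t) (f t) u v \<ge> 0"
  unfolding fwd_edge_def out_weight_def inv_def
  by (intro divide_nonneg_nonneg mult_nonneg_nonneg sum_nonneg) (auto dest: E_V intro: less_imp_le)

lemma bwd_nonneg: "inv t \<Longrightarrow> (u,v) \<in> E \<Longrightarrow> bwd_edge E (p t) (b t) u v \<ge> 0"
  unfolding bwd_edge_def in_weight_def inv_def
  by (intro divide_nonneg_nonneg mult_nonneg_nonneg sum_nonneg) (auto dest: E_V intro: less_imp_le)

lemma inv_all: "inv t"
proof (induction t)
  case 0
  then show ?case using p0_pos init_flows inputs by (auto simp: inv_def p_0 f_0 b_0)
next
  case (Suc t)
  have pp: "p (Suc t) e > 0" if e: "e \<in> E" for e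
  proof -
    obtain u v where uv: "e = (u,v)" by (cases e)
    have "p t e > 0" using Suc e unfolding inv_def by blast
    then show ?thesis using fwd_nonneg[OF Suc, of u v] bwd_nonneg[OF Suc, of u v] e uv decay
      by (simp add: p_Suc)
  qed
  have ff: "f (Suc t) v \<ge> 0" if v: "v \<in> set P1 \<union> set P2" for v
  proof -
    have "(\<Sum>z\<in>{z. (z, v) \<in> E}. fwd_edge E (p t) (f t) z v) \<ge> 0"
      by (rule sum_nonneg) (use fwd_nonneg[OF Suc] in auto)
    moreover have "1 - l v \<ge> 0" using leak v by auto
    ultimately show ?thesis using inputs by (simp add: f_Suc)
  qed
  have bb: "b (Suc t) v \<ge> 0" if v: "v \<in> set P1 \<union> set P2" for v
  proof -
    have "(\<Sum>z\<in>{z. (v, z) \<in> E}. bwd_edge E (p t) (b t) v z) \<ge> 0"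
      by (rule sum_nonneg) (use bwd_nonneg[OF Suc] in auto)
    moreover have "1 - l v \<ge> 0" using leak v by auto
    ultimately show ?thesis using inputs by (simp add: b_Suc)
  qed
  show ?case using pp ff bb by (auto simp: inv_def)
qed

lemma p_pos: "e \<in> E \<Longrightarrow> p t e > 0" using inv_all unfolding inv_def by blast

lemma drop_last1: "length xs = Suc n \<Longrightarrow> drop n xs = [xs ! n]"
  by (metis Cons_nth_drop_Suc drop_all lessI order_refl)

lemma prop_aux:
  assumes tp: "two_parallel_paths P Q s d" and EPQ: "E = path_edges P \<union> path_edges Q"
    and j: "j < length P - 1 - 1"
  shows "b (\<tau> + Suc j) (P!(length P - 1 - 1 - j)) =
     prod_list (map (\<lambda>v. 1 - l v) (drop (length P - 1 - 1 - j) (butlast P))) *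
     bwd_edge E (p \<tau>) (b \<tau>) (P!(length P - 1 - 1)) d"
  using j
proof (induction j arbitrary: \<tau>)
  case 0
  define M where "M = length P - 1"
  have M2: "M \<ge> 2" using 0 unfolding M_def by simp
  have dP: "distinct P" using tp unfolding two_parallel_paths_def by blast
  have ne: "P!(M-1) \<noteq> d" using tp_last[OF tp] dist_idx[OF dP, of "M-1" M] M2 unfolding M_def by auto
  have out: "{z. (P!(M-1), z) \<in> E} = {d}"
    using out_inner[OF tp, of "M-1"] M2 tp_last[OF tp] EPQ unfolding M_def by (simp add: Suc_diff_Suc)
  have dr: "drop (M-1) (butlast P) = [P!(M-1)]"
    using drop_last1[of "butlast P" "M-1"] M2 unfolding M_def by (simp add: nth_butlast)
  have e: "length P - 1 - 1 - 0 = M - 1" "length P - 1 - 1 = M - 1" unfolding M_def by simp_all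
  show ?case unfolding e using ne out dr by (simp add: b_Suc)
next
  case (Suc j)
  define M where "M = length P - 1"
  define k where "k = M - 1 - Suc j"
  have kpos: "0 < k" "Suc k < M" using Suc.prems unfolding k_def M_def by auto
  have k1: "Suc k = M - 1 - j" using Suc.prems unfolding k_def M_def by auto
  have dP: "distinct P" using tp unfolding two_parallel_paths_def by blast
  have ne: "P!k \<noteq> d" using tp_last[OF tp] dist_idx[OF dP, of k M] kpos unfolding M_def by auto
  have out: "{z. (P!k, z) \<in> E} = {P!Suc k}"
    using out_inner[OF tp, of k] kpos EPQ unfolding M_def by simp
  have inn: "{z. (z, P!Suc k) \<in> E} = {P!k}"
    using in_inner[OF tp, of "Suc k"] kpos EPQ unfolding M_def by simp
  have "(P!k, P!Suc k) \<in> path_edges P" unfolding pe_iff using kpos unfolding M_def by (intro exI[of _ k]) auto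
  then have edge: "(P!k, P!Suc k) \<in> E" using EPQ by blast
  have pp: "p (\<tau> + Suc j) (P!k, P!Suc k) > 0" by (rule p_pos[OF edge])
  have bw: "bwd_edge E (p (\<tau> + Suc j)) (b (\<tau> + Suc j)) (P!k) (P!Suc k) = b (\<tau> + Suc j) (P!Suc k)"
    using pp inn unfolding bwd_edge_def in_weight_def by simp
  have dr: "drop k (butlast P) = P!k # drop (Suc k) (butlast P)"
    using Cons_nth_drop_Suc[of k "butlast P"] kpos unfolding M_def by (simp add: nth_butlast)
  have IH: "b (\<tau> + Suc j) (P!Suc k) = prod_list (map (\<lambda>v. 1 - l v) (drop (Suc k) (butlast P))) *
     bwd_edge E (p \<tau>) (b \<tau>) (P!(M - 1)) d"
    using Suc.IH[of \<tau>] Suc.prems k1 unfolding M_def by simp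
  have "b (\<tau> + Suc (Suc j)) (P!k) = (1 - l (P!k)) * b (\<tau> + Suc j) (P!Suc k)"
    using ne out bw by (simp add: b_Suc)
  also have "\<dots> = prod_list (map (\<lambda>v. 1 - l v) (drop k (butlast P))) *
     bwd_edge E (p \<tau>) (b \<tau>) (P!(M - 1)) d" using IH dr by simp
  finally show ?case unfolding k_def M_def by simp
qed

lemma B_s:
  assumes tp: "two_parallel_paths P Q s d" and EPQ: "E = path_edges P \<union> path_edges Q"
    and t: "t \<ge> length P - 1"
  shows "bwd_edge E (p t) (b t) s (P!1) = (1 - path_leak l P) *
     bwd_edge E (p (t - (length P - 1) + 1)) (b (t - (length P - 1) + 1)) (P!(length P - 1 - 1)) d"
proof -
  define M where "M = length P - 1"
  have M1: "M \<ge> 1" using tp unfolding two_parallel_paths_def M_def by auto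
  have bt: "butlast (tl P) = drop 1 (butlast P)" by (simp add: butlast_drop[symmetric] drop_Suc)
  show ?thesis
  proof (cases "M = 1")
    case True
    then have "length P = 2" unfolding M_def using M1 by linarith
    then have "length (butlast (tl P)) = 0" by simp
    then have "butlast (tl P) = []" by (simp only: length_0_conv)
    then have "path_leak l P = 0" by (simp add: path_leak_def)
    moreover have "P!1 = d" "P!(length P - 1 - 1) = s" using tp_last[OF tp] tp_0[OF tp] True unfolding M_def by auto
    moreover have tt: "t - (length P - 1) + 1 = t" using True t unfolding M_def by simp
    ultimately show ?thesis unfolding tt by simp
  next
    case False
    then have M2: "M \<ge> 2" using M1 by linarith
    have inn: "{z. (z, P!1) \<in> E} = {s}"
      using in_inner[OF tp, of 1] M2 EPQ tp_0[OF tp] unfolding M_def by simp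
    have edge: "(s, P!1) \<in> E" using EPQ M2 tp_0[OF tp] unfolding M_def by (force simp: pe_iff)
    have pp: "p t (s, P!1) > 0" by (rule p_pos[OF edge])
    have bw: "bwd_edge E (p t) (b t) s (P!1) = b t (P!1)"
      using pp inn unfolding bwd_edge_def in_weight_def by simp
    have A: "b (t - M + 1 + Suc (M - 2)) (P!(length P - 1 - 1 - (M - 2))) =
     prod_list (map (\<lambda>v. 1 - l v) (drop (length P - 1 - 1 - (M - 2)) (butlast P))) *
     bwd_edge E (p (t - M + 1)) (b (t - M + 1)) (P!(length P - 1 - 1)) d"
      by (rule prop_aux[OF tp EPQ]) (use M2 in \<open>simp add: M_def\<close>)
    have e1: "t - M + 1 + Suc (M - 2) = t" "length P - 1 - 1 - (M - 2) = 1" using M2 t unfolding M_def by auto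
    show ?thesis using A bw bt unfolding e1 by (simp add: path_leak_def M_def)
  qed
qed

end


lemma beta_ineq:
  fixes A B C D r :: real
  assumes "A > 0" "B > 0" "C > 0" "D > 0" "r > 0" "r \<le> A / B" "r \<le> C / D"
  shows "r * (D / (C + D)) \<le> A / (A + B)"
proof -
  have 1: "r * B \<le> A" using assms by (simp add: field_simps)
  have 2: "r * D \<le> C" using assms by (simp add: field_simps)
  have "r * (D / (C + D)) \<le> r / (1 + r)"
    using 2 assms by (simp add: field_simps)
  also have "\<dots> \<le> A / (A + B)" using 1 assms by (simp add: field_simps)
  finally show ?thesis .
qed

lemma leak_nonneg:
  assumes "\<forall>v \<in> set P. 0 \<le> l v \<and> l v \<le> 1"
  shows "1 - path_leak l P \<ge> 0"
proof -
  have "set (butlast (tl P)) \<subseteq> set P"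
    by (metis in_set_butlastD list.set_sel(2) subsetI tl_Nil)
  then have "prod_list (map (\<lambda>v. 1 - l v) (butlast (tl P))) \<ge> 0"
    using assms by (intro prod_list_nonneg) fastforce
  then show ?thesis unfolding path_leak_def by simp
qed

theorem mainTheorem7:
  fixes E :: "('v \<times> 'v) set" and s d :: 'v and P1 P2 :: "'v list"
    and l :: "'v \<Rightarrow> real" and \<delta> fbar bbar :: real
    and p0 :: "'v \<times> 'v \<Rightarrow> real" and f0 b0 :: "'v \<Rightarrow> real"
    and p :: "nat \<Rightarrow> 'v \<times> 'v \<Rightarrow> real" and f b :: "nat \<Rightarrow> 'v \<Rightarrow> real"
    and t :: nat
  assumes paths: "two_parallel_paths P1 P2 s d"
    and E_def: "E = path_edges P1 \<union> path_edges P2"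
    and leak: "\<forall>v \<in> set P1 \<union> set P2. 0 \<le> l v \<and> l v \<le> 1"
    and decay: "0 < \<delta>" "\<delta> < 1"
    and inputs: "fbar > 0" "bbar > 0"
    and p0_pos: "\<forall>e \<in> E. p0 e > 0"
    and init_flows: "\<forall>v \<in> set P1 \<union> set P2. f0 v \<ge> 0 \<and> b0 v \<ge> 0"
    and p_def: "p = aco_pher E s d l \<delta> (\<lambda>_. fbar) (\<lambda>_. bbar) p0 f0 b0"
    and f_def: "f = aco_fwd E s d l \<delta> (\<lambda>_. fbar) (\<lambda>_. bbar) p0 f0 b0"
    and b_def: "b = aco_bwd E s d l \<delta> (\<lambda>_. fbar) (\<lambda>_. bbar) p0 f0 b0"
    and leak_order: "path_leak l P1 < path_leak l P2"
    and t_ge: "t \<ge> max (length P1 - 1) (length P2 - 1)"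
  shows
   "let m = length P1 - 1; n = length P2 - 1; L = max m n;
        s1 = P1 ! 1; s2 = P2 ! 1; d1 = P1 ! (m - 1); d2 = P2 ! (n - 1);
        r_s = (\<lambda>\<tau>. p \<tau> (s, s1) / p \<tau> (s, s2));
        r_d = (\<lambda>\<tau>. p \<tau> (d1, d) / p \<tau> (d2, d));
        r_min = Min ({r_s (t - i) | i. i < L} \<union> {r_d (t - i) | i. i < L});
        a = r_s t / r_min;
        b1 = bwd_edge E (p (t - m + 1)) (b (t - m + 1)) d1 d;
        b2 = bwd_edge E (p (t - n + 1)) (b (t - n + 1)) d2 d;
        \<beta> = b1 / (b2 * r_min);
        f2 = fwd_edge E (p t) (f t) s s2;
        \<gamma> = (a * p t (s, s2) + a * f2 + (1 - path_leak l P1) * \<beta> * b2)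
            / (p t (s, s2) + f2 + (1 - path_leak l P2) * b2)
    in a \<ge> 1 \<and> \<beta> \<ge> 1 \<and> \<gamma> > 1 \<and> r_s (Suc t) = r_min * \<gamma> \<and> r_s (Suc t) > r_min"
proof -
  interpret aco E s d P1 P2 l \<delta> fbar bbar p0 f0 b0 p f b
    using assms by unfold_locales auto
  have tp1: "two_parallel_paths P1 P2 s d" by (rule paths)
  have tp2: "two_parallel_paths P2 P1 s d" by (rule tp_sym[OF paths])
  have E2: "E = path_edges P2 \<union> path_edges P1" using E_def by blast
  have dP: "distinct P1" "distinct P2" "length P1 \<ge> 2" "length P2 \<ge> 2"
      "set P1 \<inter> set P2 = {s, d}"
    using paths unfolding two_parallel_paths_def by blast+
  define m where "m = length P1 - 1"
  define n where "n = length P2 - 1"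
  define L where "L = max m n"
  define s1 where "s1 = P1 ! 1"
  define s2 where "s2 = P2 ! 1"
  define d1 where "d1 = P1 ! (m - 1)"
  define d2 where "d2 = P2 ! (n - 1)"
  define r_s where "r_s = (\<lambda>\<tau>. p \<tau> (s, s1) / p \<tau> (s, s2))"
  define r_d where "r_d = (\<lambda>\<tau>. p \<tau> (d1, d) / p \<tau> (d2, d))"
  define S where "S = {r_s (t - i) | i. i < L} \<union> {r_d (t - i) | i. i < L}"
  define r_min where "r_min = Min S"
  define a where "a = r_s t / r_min"
  define b1 where "b1 = bwd_edge E (p (t - m + 1)) (b (t - m + 1)) d1 d"
  define b2 where "b2 = bwd_edge E (p (t - n + 1)) (b (t - n + 1)) d2 d"
  define \<beta> where "\<beta> = b1 / (b2 * r_min)"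
  define f2 where "f2 = fwd_edge E (p t) (f t) s s2"
  define \<gamma> where "\<gamma> = (a * p t (s, s2) + a * f2 + (1 - path_leak l P1) * \<beta> * b2)
            / (p t (s, s2) + f2 + (1 - path_leak l P2) * b2)"
  have m1: "m \<ge> 1" "n \<ge> 1" using dP unfolding m_def n_def by auto
  have tm: "t \<ge> m" "t \<ge> n" using t_ge unfolding m_def n_def by auto
  have lk0: "path_leak l P = 0" if "length P = 2" for P :: "'v list"
  proof -
    have "length (butlast (tl P)) = 0" using that by simp
    then have "butlast (tl P) = []" by (simp only: length_0_conv)
    then show ?thesis by (simp add: path_leak_def)
  qed
  have not11: "\<not> (m = 1 \<and> n = 1)"
  proof
    assume "m = 1 \<and> n = 1"
    then have "length P1 = 2" "length P2 = 2" using m1 unfolding m_def n_def by auto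
    then show False using leak_order lk0 by simp
  qed
  have P1m: "P1 ! m = d" "P1 ! 0 = s" using tp_last[OF tp1] tp_0[OF tp1] unfolding m_def by auto
  have P2n: "P2 ! n = d" "P2 ! 0 = s" using tp_last[OF tp2] tp_0[OF tp2] unfolding n_def by auto
  have s12: "s1 \<noteq> s2"
  proof
    assume eq: "s1 = s2"
    have "s1 \<in> set P1" "s2 \<in> set P2" using dP unfolding s1_def s2_def by auto
    then have "s1 = s \<or> s1 = d" using eq dP(5) by blast
    moreover have "P1 \<noteq> []" using dP by auto
    moreover have "s1 \<noteq> s" using dist_idx[OF dP(1), of 1 0] P1m dP \<open>P1 \<noteq> []\<close> unfolding s1_def by auto
    ultimately have "s1 = d" by blast
    have lt: "m < length P1" "n < length P2" "1 < length P1" "1 < length P2" using dP unfolding m_def n_def by auto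
    have "P1!1 = P1!m" "P2!1 = P2!n" using \<open>s1 = d\<close> eq P1m P2n unfolding s1_def s2_def by auto
    then have "m = 1" "n = 1" using dist_idx[OF dP(1) lt(3) lt(1)] dist_idx[OF dP(2) lt(4) lt(2)] by auto
    then show False using not11 by blast
  qed
  have d12: "d1 \<noteq> d2"
  proof
    assume eq: "d1 = d2"
    have "d1 \<in> set P1" "d2 \<in> set P2" using dP m1 unfolding d1_def d2_def m_def n_def by auto
    then have "d1 = s \<or> d1 = d" using eq dP(5) by blast
    moreover have "d1 \<noteq> d" using dist_idx[OF dP(1), of "m-1" m] P1m dP m1 unfolding d1_def m_def by auto
    ultimately have "d1 = s" by blast
    have lt: "m - 1 < length P1" "n - 1 < length P2" "0 < length P1" "0 < length P2" using dP unfolding m_def n_def by auto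
    have "P1!(m-1) = P1!0" "P2!(n-1) = P2!0" using \<open>d1 = s\<close> eq P1m P2n unfolding d1_def d2_def by auto
    then have "m - 1 = 0" "n - 1 = 0" using dist_idx[OF dP(1) lt(1) lt(3)] dist_idx[OF dP(2) lt(2) lt(4)] by auto
    then have "m = 1" "n = 1" using m1 by auto
    then show False using not11 by blast
  qed
  have outs: "{z. (s, z) \<in> E} = {s1, s2}" using out_s[OF tp1] E_def unfolding s1_def s2_def by simp
  have ind: "{z. (z, d) \<in> E} = {d1, d2}" using in_d[OF tp1] E_def
    unfolding d1_def d2_def m_def n_def by simp
  have eS: "(s, s1) \<in> E" "(s, s2) \<in> E" using outs by auto
  have eD: "(d1, d) \<in> E" "(d2, d) \<in> E" using ind by auto
  have pos: "p \<tau> (s, s1) > 0" "p \<tau> (s, s2) > 0" "p \<tau> (d1, d) > 0" "p \<tau> (d2, d) > 0" for \<tau>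
    using p_pos eS eD by auto
  have Spos: "x > 0" if "x \<in> S" for x
    using that pos unfolding S_def r_s_def r_d_def by auto
  have finS: "finite S" unfolding S_def by simp
  have L1: "L \<ge> 1" using m1 unfolding L_def by auto
  have inS1: "r_s t \<in> S" unfolding S_def using L1 by (auto intro!: exI[of _ 0])
  have inS2: "r_d (t - m + 1) \<in> S"
  proof -
    have e: "t - m + 1 = t - (m - 1)" using m1 tm by simp
    have "m - 1 < L" using m1 unfolding L_def by simp
    then show ?thesis unfolding S_def e by blast
  qed
  have inS3: "r_d (t - n + 1) \<in> S"
  proof -
    have e: "t - n + 1 = t - (n - 1)" using m1 tm by simp
    have "n - 1 < L" using m1 unfolding L_def by simp
    then show ?thesis unfolding S_def e by blast
  qed
  have rmin_pos: "r_min > 0" unfolding r_min_def using Min_in[OF finS] inS1 Spos by blast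
  have le1: "r_min \<le> r_s t" "r_min \<le> r_d (t - m + 1)" "r_min \<le> r_d (t - n + 1)"
    unfolding r_min_def using Min_le[OF finS] inS1 inS2 inS3 by auto
  have a1: "a \<ge> 1" unfolding a_def using le1 rmin_pos by simp
  have bw_d: "bwd_edge E (p \<tau>) (b \<tau>) x d = bbar * (p \<tau> (x, d) / (p \<tau> (d1, d) + p \<tau> (d2, d)))" for x \<tau>
    unfolding bwd_edge_def in_weight_def ind using d12 by (simp add: b_d)
  have b2pos: "b2 > 0" unfolding b2_def bw_d using pos inputs by (simp add: add_pos_pos)
  have b1ge: "r_min * b2 \<le> b1"
  proof -
    have "r_min * (p (t - n + 1) (d2, d) / (p (t - n + 1) (d1, d) + p (t - n + 1) (d2, d)))
       \<le> p (t - m + 1) (d1, d) / (p (t - m + 1) (d1, d) + p (t - m + 1) (d2, d))"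
      by (rule beta_ineq) (use pos rmin_pos le1 in \<open>auto simp: r_d_def\<close>)
    then show ?thesis unfolding b1_def b2_def bw_d using inputs
      by (metis mult.left_commute mult_le_cancel_left_pos)
  qed
  have beta1: "\<beta> \<ge> 1" unfolding \<beta>_def using b1ge b2pos rmin_pos by (simp add: field_simps)
  have lp: "1 - path_leak l P1 \<ge> 0" "1 - path_leak l P2 \<ge> 0"
    using leak_nonneg[of P1 l] leak_nonneg[of P2 l] leak by auto
  have f2nn: "f2 \<ge> 0" unfolding f2_def using fwd_nonneg[OF inv_all eS(2)] .
  have F1: "fwd_edge E (p t) (f t) s s1 = r_s t * f2"
    unfolding f2_def fwd_edge_def r_s_def using pos[of t] by (simp add: field_simps)
  have B1: "bwd_edge E (p t) (b t) s s1 = (1 - path_leak l P1) * b1"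
    using B_s[OF tp1 E_def] tm unfolding b1_def s1_def d1_def m_def by simp
  have B2: "bwd_edge E (p t) (b t) s s2 = (1 - path_leak l P2) * b2"
    using B_s[OF tp2 E2] tm unfolding b2_def s2_def d2_def n_def by simp
  define p1 where "p1 = p t (s, s1)"
  define p2 where "p2 = p t (s, s2)"
  have p12: "p1 > 0" "p2 > 0" using pos unfolding p1_def p2_def by auto
  have rs_t: "r_s t = p1 / p2" unfolding r_s_def p1_def p2_def by simp
  have rsS: "r_s (Suc t) = (p1 + r_s t * f2 + (1 - path_leak l P1) * b1) /
       (p2 + f2 + (1 - path_leak l P2) * b2)"
    unfolding r_s_def using decay(1)
    by (simp add: p_Suc F1 B1 B2 p1_def p2_def f2_def r_s_def)
  have den: "p2 + f2 + (1 - path_leak l P2) * b2 > 0" using p12 f2nn lp b2pos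
    by (simp add: add_pos_nonneg)
  have ra: "r_min * a = r_s t" unfolding a_def using rmin_pos by simp
  have rb: "r_min * \<beta> * b2 = b1" unfolding \<beta>_def using rmin_pos b2pos by simp
  have rp: "r_s t * p2 = p1" using rs_t p12 by simp
  have "r_min * \<gamma> = (r_min * (a * p2 + a * f2 + (1 - path_leak l P1) * \<beta> * b2)) /
       (p2 + f2 + (1 - path_leak l P2) * b2)"
    unfolding \<gamma>_def p2_def by simp
  also have "r_min * (a * p2 + a * f2 + (1 - path_leak l P1) * \<beta> * b2) =
      (r_min * a) * p2 + (r_min * a) * f2 + (1 - path_leak l P1) * (r_min * \<beta> * b2)"
    by (simp add: algebra_simps)
  also have "\<dots> = p1 + r_s t * f2 + (1 - path_leak l P1) * b1" by (simp only: ra rb rp)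
  finally have eq: "r_s (Suc t) = r_min * \<gamma>" using rsS by simp
  have num_gt: "a * p2 + a * f2 + (1 - path_leak l P1) * \<beta> * b2 > p2 + f2 + (1 - path_leak l P2) * b2"
  proof -
    have "a * p2 \<ge> p2" "a * f2 \<ge> f2" using a1 p12 f2nn by (simp_all add: mult_le_cancel_right1)
    moreover have "(1 - path_leak l P1) * \<beta> \<ge> 1 - path_leak l P1"
      using beta1 lp by (simp add: mult_le_cancel_left1)
    then have "(1 - path_leak l P1) * \<beta> * b2 > (1 - path_leak l P2) * b2"
      using leak_order b2pos by (smt (verit) mult_strict_right_mono)
    ultimately show ?thesis by linarith
  qed
  have g1: "\<gamma> > 1" unfolding \<gamma>_def p2_def[symmetric] using num_gt den by simp
  have gt: "r_s (Suc t) > r_min" using eq g1 rmin_pos by simp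
  have "a \<ge> 1 \<and> \<beta> \<ge> 1 \<and> \<gamma> > 1 \<and> r_s (Suc t) = r_min * \<gamma> \<and> r_s (Suc t) > r_min"
    using a1 beta1 g1 eq gt by blast
  then show ?thesis
    unfolding Let_def \<gamma>_def f2_def \<beta>_def b1_def b2_def a_def r_min_def S_def r_d_def r_s_def
      d1_def d2_def s1_def s2_def L_def m_def n_def .
qed


end
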